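(* Let $\mathbf A$ be a real $n\times n$ matrix. Then $\mathbf A$ is eventually strictly $J$-sign-symmetric (ESJS) if and only if $\mathbf A=\mathbf D\widetilde{\mathbf A}\mathbf D^{-1}$ for some nonsingular real diagonal matrix $\mathbf D$ and some eventually positive matrix $\widetilde{\mathbf A}$.
   Context: For $J\subseteq[n]=\{1,\dots,n\}$ with $J^c=[n]\setminus J$, a real matrix $\mathbf B=\{b_{ij}\}$ is strictly $J$-sign-symmetric if $b_{ij}>0$ for $(i,j)\in (J\times J)\cup(J^c\times J^c)$ and $b_{ij}<0$ for $(i,j)\in(J\times J^c)\cup(J^c\times J)$; $\mathbf B$ is called SJS if it is strictly $J$-sign-symmetric for some $J\subseteq[n]$. A real matrix $\mathbf A$ is ESJS if there is a positive integer $k_0$ such that $\mathbf A^k$ is SJS for all $k\ge k_0$. A real matrix $\widetilde{\mathbf A}$ is eventually positive if there is a positive integer $k_0$ such that $\widetilde{\mathbf A}^k$ has all entries positive for all $k\ge k_0$. *)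

theory Defs
  imports "HOL-Analysis.Analysis"
begin

definition mpow :: "real^'n^'n \<Rightarrow> nat \<Rightarrow> real^'n^'n" where
  "mpow A k = ((\<lambda>X. A ** X) ^^ k) (mat 1)"

definition strictly_J_sign_symmetric :: "'n set \<Rightarrow> real^'n^'n \<Rightarrow> bool" where
  "strictly_J_sign_symmetric J B \<longleftrightarrow>
     (\<forall>i j. ((i \<in> J \<longleftrightarrow> j \<in> J) \<longrightarrow> B $ i $ j > 0) \<and>
            ((i \<in> J \<longleftrightarrow> j \<notin> J) \<longrightarrow> B $ i $ j < 0))"

definition SJS :: "real^'n^'n \<Rightarrow> bool" where
  "SJS B \<longleftrightarrow> (\<exists>J. strictly_J_sign_symmetric J B)"

definition ESJS :: "real^'n^'n \<Rightarrow> bool" where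
  "ESJS A \<longleftrightarrow> (\<exists>k0>0. \<forall>k\<ge>k0. SJS (mpow A k))"

definition eventually_positive :: "real^'n^'n \<Rightarrow> bool" where
  "eventually_positive A \<longleftrightarrow> (\<exists>k0>0. \<forall>k\<ge>k0. \<forall>i j. mpow A k $ i $ j > 0)"

definition diag_mat :: "('n \<Rightarrow> real) \<Rightarrow> real^'n^'n" where
  "diag_mat d = (\<chi> i j. if i = j then d i else 0)"

end

theory Submission
  imports Defs
begin

lemma diag_left: "(diag_mat d ** B) $ i $ j = d i * B $ i $ j"
proof -
  have "(diag_mat d ** B) $ i $ j = (\<Sum>k\<in>UNIV. if k = i then d i * B $ i $ j else 0)"
    unfolding matrix_matrix_mult_def diag_mat_def by (simp only: vec_lambda_beta, rule sum.cong, auto)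
  then show ?thesis by simp
qed

lemma diag_right: "(B ** diag_mat d) $ i $ j = B $ i $ j * d j"
proof -
  have "(B ** diag_mat d) $ i $ j = (\<Sum>k\<in>UNIV. if k = j then B $ i $ j * d j else 0)"
    unfolding matrix_matrix_mult_def diag_mat_def by (simp only: vec_lambda_beta, rule sum.cong, auto)
  then show ?thesis by simp
qed

lemma diag_diag: "diag_mat d ** diag_mat e = diag_mat (\<lambda>i. d i * e i)"
  by (simp add: vec_eq_iff diag_right) (simp add: diag_mat_def)

lemma mpow_0[simp]: "mpow A 0 = mat 1" by (simp add: mpow_def)
lemma mpow_Suc: "mpow A (Suc k) = A ** mpow A k" by (simp add: mpow_def)

lemma mpow_add: "mpow A (a+b) = mpow A a ** mpow A b"
  by (induction a) (simp_all add: mpow_Suc matrix_mul_assoc)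

lemma mpow_mult: "mpow A (a*b) = mpow (mpow A a) b"
  by (induction b) (simp_all add: mpow_Suc mpow_add)

lemma mpow_conj:
  assumes "Di ** D = mat 1" "D ** Di = mat 1"
  shows "mpow (D ** B ** Di) k = D ** mpow B k ** Di"
proof (induction k)
  case 0 then show ?case using assms by simp
next
  case (Suc k)
  have "mpow (D ** B ** Di) (Suc k) = D ** B ** Di ** (D ** mpow B k ** Di)"
    using Suc by (simp add: mpow_Suc)
  also have "\<dots> = D ** B ** (Di ** D) ** mpow B k ** Di" by (simp add: matrix_mul_assoc)
  also have "\<dots> = D ** mpow B (Suc k) ** Di" using assms by (simp add: mpow_Suc matrix_mul_assoc)
  finally show ?case .
qed

lemma pos_mult:
  fixes P Q :: "real^'n^'n"
  assumes "\<forall>i j. P$i$j > 0" "\<forall>i j. Q$i$j > 0"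
  shows "(P ** Q)$i$j > 0"
  unfolding matrix_matrix_mult_def using assms
  by (simp, intro sum_pos) (auto intro: mult_pos_pos)

lemma pos_mpow:
  fixes P :: "real^'n^'n"
  assumes "\<forall>i j. P$i$j > 0" "m > 0"
  shows "mpow P m $i$j > 0"
  using assms(2)
proof (induction m arbitrary: i j)
  case 0 then show ?case by simp
next
  case (Suc m)
  show ?case
  proof (cases "m = 0")
    case True then show ?thesis using assms by (simp add: mpow_Suc)
  next
    case False
    then show ?thesis using Suc assms by (simp add: mpow_Suc pos_mult)
  qed
qed

definition sv :: "'n set \<Rightarrow> 'n \<Rightarrow> real" where
  "sv J i = (if i \<in> J then 1 else -1)"

lemma sv_sq: "sv J i * sv J i = 1" by (simp add: sv_def)

lemma sjs_iff: "strictly_J_sign_symmetric J B \<longleftrightarrow> (\<forall>i j. sv J i * sv J j * B$i$j > 0)"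
  unfolding strictly_J_sign_symmetric_def sv_def
  by (auto simp: mult_less_0_iff)

lemma svD: "diag_mat (sv J) ** diag_mat (sv J) = mat 1"
  by (simp add: diag_diag sv_sq) (simp add: diag_mat_def mat_def vec_eq_iff)

lemma sjs_pow:
  fixes B :: "real^'n^'n"
  assumes "strictly_J_sign_symmetric J B" "m > 0"
  shows "strictly_J_sign_symmetric J (mpow B m)"
proof -
  let ?D = "diag_mat (sv J)"
  define P where "P = ?D ** B ** ?D"
  have Ppos: "\<forall>i j. P$i$j > 0" using assms(1) unfolding sjs_iff P_def
    by (simp add: diag_left diag_right mult.commute mult.left_commute)
  have "B = ?D ** P ** ?D" unfolding P_def
    by (simp add: matrix_mul_assoc svD) (simp add: matrix_mul_assoc[symmetric] svD)
  hence "mpow B m = ?D ** mpow P m ** ?D" using mpow_conj[OF svD svD] by metis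
  hence "mpow B m $ i $ j = sv J i * mpow P m $i$j * sv J j" for i j
    by (simp add: diag_left diag_right)
  then show ?thesis unfolding sjs_iff using pos_mpow[OF Ppos assms(2)]
    by (simp add: sv_def)
qed

lemma sv_sign_eq:
  assumes "sv J i * sv J j * c > 0" "sv K i * sv K j * c > 0"
  shows "sv J i * sv J j = sv K i * sv K j"
  using assms by (auto simp: sv_def split: if_splits)

theorem lemma2:
  fixes A :: "real^'n^'n"
  shows "ESJS A \<longleftrightarrow>
    (\<exists>d At. (\<forall>i. d i \<noteq> 0) \<and> eventually_positive At \<and>
       A = diag_mat d ** At ** matrix_inv (diag_mat d))"
proof
  assume "ESJS A"
  then obtain k0 where k0: "k0 > 0" "\<forall>k\<ge>k0. SJS (mpow A k)" unfolding ESJS_def by blast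
  then obtain J where J: "strictly_J_sign_symmetric J (mpow A k0)" unfolding SJS_def by blast
  have allJ: "strictly_J_sign_symmetric J (mpow A k)" if kk: "k \<ge> k0" for k
  proof -
    obtain K where K: "strictly_J_sign_symmetric K (mpow A k)" using k0(2) kk unfolding SJS_def by blast
    have kp: "k > 0" using kk k0 by simp
    have "strictly_J_sign_symmetric K (mpow A (k*k0))"
      using sjs_pow[OF K k0(1)] by (simp add: mpow_mult)
    moreover have "strictly_J_sign_symmetric J (mpow A (k*k0))"
      using sjs_pow[OF J kp] by (simp add: mpow_mult mult.commute)
    ultimately have eq: "sv J i * sv J j = sv K i * sv K j" for i j
      unfolding sjs_iff by (meson sv_sign_eq)
    show ?thesis using K unfolding sjs_iff by (simp add: eq)
  qed
  let ?D = "diag_mat (sv J)"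
  define At where "At = ?D ** A ** ?D"
  have inv: "?D ** matrix_inv ?D = mat 1" "matrix_inv ?D ** ?D = mat 1"
    unfolding matrix_inv_def by (rule someI2[of _ ?D], use svD in auto)+
  have "A = ?D ** At ** matrix_inv ?D"
  proof -
    have "?D ** At ** matrix_inv ?D = (?D ** ?D) ** A ** (?D ** matrix_inv ?D)"
      unfolding At_def by (simp add: matrix_mul_assoc)
    then show ?thesis using svD[of J] inv by (simp add: matrix_mul_assoc[symmetric])
  qed
  moreover have "eventually_positive At"
    unfolding eventually_positive_def
  proof (intro exI[of _ k0] conjI allI impI)
    fix k i j assume "k \<ge> k0"
    have "mpow At k = ?D ** mpow A k ** ?D" unfolding At_def using mpow_conj[OF svD svD] .
    then show "mpow At k $ i $ j > 0" using allJ[OF \<open>k \<ge> k0\<close>] unfolding sjs_iff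
      by (simp add: diag_left diag_right mult.commute mult.left_commute)
  qed (use k0 in auto)
  moreover have "\<forall>i. sv J i \<noteq> 0" by (simp add: sv_def)
  ultimately show "\<exists>d At. (\<forall>i. d i \<noteq> 0) \<and> eventually_positive At \<and>
       A = diag_mat d ** At ** matrix_inv (diag_mat d)" by blast
next
  assume "\<exists>d At. (\<forall>i. d i \<noteq> 0) \<and> eventually_positive At \<and>
       A = diag_mat d ** At ** matrix_inv (diag_mat d)"
  then obtain d At where d: "\<forall>i. d i \<noteq> 0" and ep: "eventually_positive At"
    and A: "A = diag_mat d ** At ** matrix_inv (diag_mat d)" by blast
  let ?D = "diag_mat d" and ?E = "diag_mat (\<lambda>i. 1 / d i)"
  have DE: "?D ** ?E = mat 1" "?E ** ?D = mat 1" using d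
    by (simp_all add: diag_diag) (simp_all add: diag_mat_def mat_def vec_eq_iff)
  have inv: "?D ** matrix_inv ?D = mat 1" "matrix_inv ?D ** ?D = mat 1"
    unfolding matrix_inv_def by (rule someI2[of _ ?E], use DE in auto)+
  have "matrix_inv ?D = matrix_inv ?D ** (?D ** ?E)" using DE by simp
  also have "\<dots> = ?E" using inv by (simp add: matrix_mul_assoc)
  finally have Ei: "matrix_inv ?D = ?E" .
  obtain k0 where k0: "k0 > 0" "\<forall>k\<ge>k0. \<forall>i j. mpow At k $ i $ j > 0"
    using ep unfolding eventually_positive_def by blast
  show "ESJS A" unfolding ESJS_def SJS_def
  proof (intro exI[of _ k0] conjI allI impI)
    fix k assume "k \<ge> k0"
    have "mpow A k = ?D ** mpow At k ** ?E" using A Ei mpow_conj[OF DE(2) DE(1)] by simp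
    hence e: "mpow A k $ i $ j = d i * mpow At k $ i $ j * (1 / d j)" for i j
      by (simp add: diag_left diag_right)
    show "\<exists>J. strictly_J_sign_symmetric J (mpow A k)"
    proof (intro exI[of _ "{i. d i > 0}"])
      show "strictly_J_sign_symmetric {i. d i > 0} (mpow A k)"
        unfolding strictly_J_sign_symmetric_def e
      proof (intro allI conjI impI)
        fix i j
        have p: "mpow At k $ i $ j > 0" using k0 \<open>k \<ge> k0\<close> by blast
        have di: "d i \<noteq> 0" "d j \<noteq> 0" using d by auto
        show "(i \<in> {i. d i > 0}) = (j \<in> {i. d i > 0}) \<Longrightarrow> d i * mpow At k $ i $ j * (1 / d j) > 0"
        proof -
          assume h: "(i \<in> {i. d i > 0}) = (j \<in> {i. d i > 0})"
          have "d i * (1 / d j) > 0" using h di by (auto simp: zero_less_mult_iff zero_less_divide_iff linorder_neq_iff)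
          then have "mpow At k $ i $ j * (d i * (1 / d j)) > 0" using p by (metis mult_pos_pos)
          then show ?thesis by (simp add: algebra_simps)
        qed
        show "(i \<in> {i. d i > 0}) = (j \<notin> {i. d i > 0}) \<Longrightarrow> d i * mpow At k $ i $ j * (1 / d j) < 0"
        proof -
          assume h: "(i \<in> {i. d i > 0}) = (j \<notin> {i. d i > 0})"
          have "d i * (1 / d j) < 0" using h di by (auto simp: mult_less_0_iff divide_less_0_iff linorder_neq_iff)
          then have "mpow At k $ i $ j * (d i * (1 / d j)) < 0" using p by (metis mult_pos_neg)
          then show ?thesis by (simp add: algebra_simps)
        qed
      qed
    qed
  qed (use k0 in auto)
qed

end
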